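(* Let $b\ge1$ and identify each $f\in\mathcal{M}^b$ with the base-$(b+1)$ number $\beta(f)=\sum_{i\ge0}f(i)(b+1)^i$. Then $\beta$ is a monoid homomorphism from $\mathcal{M}^b$ with multiset addition to base-$(b+1)$ numbers with lunar multiplication: $\beta(f+g)=\beta(f)\otimes\beta(g)$ for all $f,g\in\mathcal{M}^b$, and the neutral multiset (the element $0$ with multiplicity $b$) is mapped to the digit $b$, the neutral element of lunar multiplication.
   Context: $\mathcal{M}^b$ is the set of functions $f:\mathbb{N}\to\{0,\ldots,b\}$ with finite support (finite multisets with multiplicities at most $b$). The set-array representation of $f$ is $(A_1,\ldots,A_b)$ with $A_i=\{a:f(a)\ge i\}$, and multiset addition is coordinatewise: $(A_1,\ldots,A_b)+(B_1,\ldots,B_b)=(A_1+B_1,\ldots,A_b+B_b)$, where $S+T=\{s+t:s\in S,t\in T\}$ and $S+\emptyset=\emptyset$. Base-$(b+1)$ lunar product: for $x=\sum_ix_i(b+1)^i$, $y=\sum_jy_j(b+1)^j$ with digits in $\{0,\ldots,b\}$, $x\otimes y=\sum_n(\max_{i+j=n}\min(x_i,y_j))(b+1)^n$. *)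

theory Defs
  imports Main
begin

definition Mb :: "nat \<Rightarrow> (nat \<Rightarrow> nat) set" where
  "Mb b = {f. finite {a. f a \<noteq> 0} \<and> (\<forall>a. f a \<le> b)}"

definition sumset :: "nat set \<Rightarrow> nat set \<Rightarrow> nat set" where
  "sumset S T = {s + t | s t. s \<in> S \<and> t \<in> T}"

definition set_array :: "(nat \<Rightarrow> nat) \<Rightarrow> nat \<Rightarrow> nat set" where
  "set_array f i = {a. f a \<ge> i}"

definition from_array :: "nat \<Rightarrow> (nat \<Rightarrow> nat set) \<Rightarrow> nat \<Rightarrow> nat" where
  "from_array b A a = card {i \<in> {1..b}. a \<in> A i}"

definition madd :: "nat \<Rightarrow> (nat \<Rightarrow> nat) \<Rightarrow> (nat \<Rightarrow> nat) \<Rightarrow> nat \<Rightarrow> nat" where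
  "madd b f g = from_array b (\<lambda>i. sumset (set_array f i) (set_array g i))"

definition digit :: "nat \<Rightarrow> nat \<Rightarrow> nat \<Rightarrow> nat" where
  "digit b x i = x div (b + 1) ^ i mod (b + 1)"

text \<open>Base-(b+1) lunar product; digits with index beyond x+y are all zero.\<close>
definition lunar_mult :: "nat \<Rightarrow> nat \<Rightarrow> nat \<Rightarrow> nat" where
  "lunar_mult b x y =
     (\<Sum>n\<le>x + y. Max {min (digit b x i) (digit b y (n - i)) | i. i \<le> n} * (b + 1) ^ n)"

definition beta :: "nat \<Rightarrow> (nat \<Rightarrow> nat) \<Rightarrow> nat" where
  "beta b f = (\<Sum>i\<in>{i. f i \<noteq> 0}. f i * (b + 1) ^ i)"

definition neutral_ms :: "nat \<Rightarrow> nat \<Rightarrow> nat" where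
  "neutral_ms b = (\<lambda>a. if a = 0 then b else 0)"

end

theory Submission
  imports Defs
begin

lemma sum_digit:
  fixes B :: nat
  assumes B: "B > 1" and fb: "\<And>i. f i < B"
  shows "(\<Sum>i<N. f i * B^i) div B^k mod B = (if k < N then f k else 0)"
  using fb
proof (induction k arbitrary: f N)
  case 0
  show ?case
  proof (cases N)
    case 0 then show ?thesis by simp
  next
    case (Suc M)
    have "(\<Sum>i<N. f i * B^i) = f 0 + B * (\<Sum>i<M. f (Suc i) * B^i)"
      unfolding Suc sum.lessThan_Suc_shift by (simp add: sum_distrib_left algebra_simps)
    then show ?thesis using 0 Suc by simp
  qed
next
  case (Suc k)
  show ?case
  proof (cases N)
    case 0 then show ?thesis by simp
  next
    case (Suc M)
    have e: "(\<Sum>i<N. f i * B^i) = f 0 + B * (\<Sum>i<M. f (Suc i) * B^i)"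
      unfolding Suc sum.lessThan_Suc_shift by (simp add: sum_distrib_left algebra_simps)
    have d: "(\<Sum>i<N. f i * B^i) div B = (\<Sum>i<M. f (Suc i) * B^i)"
      unfolding e using Suc.prems[of 0] B by simp
    have "(\<Sum>i<N. f i * B^i) div B^(Suc k) = ((\<Sum>i<N. f i * B^i) div B) div B^k"
      by (simp add: div_mult2_eq)
    also have "\<dots> = (\<Sum>i<M. f (Suc i) * B^i) div B^k" using d by simp
    finally show ?thesis using Suc.IH[of "\<lambda>i. f (Suc i)" M] Suc.prems \<open>N = Suc M\<close> by simp
  qed
qed

lemma beta_lessThan:
  assumes "finite {a. f a \<noteq> 0}" "{a. f a \<noteq> 0} \<subseteq> {..<N}"
  shows "beta b f = (\<Sum>i<N. f i * (b+1)^i)"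
  unfolding beta_def
  by (rule sum.mono_neutral_left) (use assms in auto)

lemma digit_beta:
  assumes "f \<in> Mb b" "b \<ge> 1"
  shows "digit b (beta b f) k = f k"
proof -
  have fin: "finite {a. f a \<noteq> 0}" and le: "\<And>a. f a \<le> b" using assms(1) by (auto simp: Mb_def)
  obtain N where N: "{a. f a \<noteq> 0} \<union> {k} \<subseteq> {..<N}"
  proof -
    have "finite ({a. f a \<noteq> 0} \<union> {k})" using fin by simp
    then obtain m where "\<forall>n\<in>{a. f a \<noteq> 0} \<union> {k}. n < m"
      unfolding finite_nat_set_iff_bounded by blast
    then show ?thesis using that by blast
  qed
  have "beta b f = (\<Sum>i<N. f i * (b+1)^i)" using beta_lessThan[OF fin] N by auto
  moreover have "k < N" using N by auto
  ultimately show ?thesis unfolding digit_def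
    using sum_digit[of "b+1" f N k] le assms(2) by (simp add: le_imp_less_Suc)
qed

lemma beta_ge:
  assumes "f \<in> Mb b" "f s \<noteq> 0"
  shows "s \<le> beta b f"
proof -
  have fin: "finite {a. f a \<noteq> 0}" using assms(1) by (auto simp: Mb_def)
  have "s < 2^s" by (rule less_exp)
  have "f s \<le> b" using assms(1) by (auto simp: Mb_def)
  then have "b \<ge> 1" using assms(2) by simp
  then have "(2::nat)^s \<le> (b+1)^s" by (intro power_mono) auto
  then have "s < (b+1)^s" using \<open>s < 2^s\<close> by linarith
  also have "(b+1)^s \<le> f s * (b+1)^s" using assms(2) by simp
  also have "\<dots> \<le> beta b f" unfolding beta_def
    by (rule member_le_sum) (use fin assms(2) in auto)
  finally show ?thesis by simp
qed

lemma madd_eq: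
  assumes "f \<in> Mb b" "g \<in> Mb b"
  shows "madd b f g n = Max {min (f i) (g (n-i)) | i. i \<le> n}"
proof -
  let ?S = "{min (f i) (g (n-i)) | i. i \<le> n}"
  have fS: "finite ?S" by simp
  have neS: "?S \<noteq> {}" by blast
  have mem: "n \<in> sumset (set_array f i) (set_array g i) \<longleftrightarrow> i \<le> Max ?S" for i
  proof -
    have "n \<in> sumset (set_array f i) (set_array g i) \<longleftrightarrow> (\<exists>s\<le>n. i \<le> min (f s) (g (n-s)))"
      unfolding sumset_def set_array_def
    proof
      assume "n \<in> {s + t |s t. s \<in> {a. i \<le> f a} \<and> t \<in> {a. i \<le> g a}}"
      then obtain s t where "n = s + t" "i \<le> f s" "i \<le> g t" by blast
      then show "\<exists>s\<le>n. i \<le> min (f s) (g (n - s))" by (intro exI[of _ s]) simp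
    next
      assume "\<exists>s\<le>n. i \<le> min (f s) (g (n - s))"
      then obtain s where "s \<le> n" "i \<le> f s" "i \<le> g (n - s)" by auto
      then show "n \<in> {s + t |s t. s \<in> {a. i \<le> f a} \<and> t \<in> {a. i \<le> g a}}"
        by (intro CollectI exI[of _ s] exI[of _ "n - s"]) simp
    qed
    also have "\<dots> \<longleftrightarrow> (\<exists>x\<in>?S. i \<le> x)"
    proof
      assume "\<exists>s\<le>n. i \<le> min (f s) (g (n - s))"
      then obtain s where "s \<le> n" "i \<le> min (f s) (g (n - s))" by blast
      then show "\<exists>x\<in>?S. i \<le> x" by (intro bexI[of _ "min (f s) (g (n - s))"]) auto
    next
      assume "\<exists>x\<in>?S. i \<le> x"
      then obtain x s where "x = min (f s) (g (n - s))" "s \<le> n" "i \<le> x" by auto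
      then show "\<exists>s\<le>n. i \<le> min (f s) (g (n - s))" by auto
    qed
    also have "\<dots> \<longleftrightarrow> i \<le> Max ?S" using Max_ge_iff[OF fS neS] by simp
    finally show ?thesis .
  qed
  obtain s where "Max ?S = min (f s) (g (n - s))" using Max_in[OF fS neS] by auto
  moreover have "f s \<le> b" using assms(1) by (simp add: Mb_def)
  ultimately have "Max ?S \<le> b" by simp
  then have "{i \<in> {1..b}. n \<in> sumset (set_array f i) (set_array g i)} = {1..Max ?S}"
    unfolding mem by auto
  then show ?thesis unfolding madd_def from_array_def by simp
qed

theorem mainTheorem11:
  fixes b :: nat
  assumes "b \<ge> 1"
  shows "(\<forall>f \<in> Mb b. \<forall>g \<in> Mb b. beta b (madd b f g) = lunar_mult b (beta b f) (beta b g))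
         \<and> beta b (neutral_ms b) = b"
proof (intro conjI ballI)
  fix f g assume f: "f \<in> Mb b" and g: "g \<in> Mb b"
  define x where "x = beta b f"
  define y where "y = beta b g"
  have sub: "{n. madd b f g n \<noteq> 0} \<subseteq> {..<Suc (x+y)}"
  proof
    fix n assume "n \<in> {n. madd b f g n \<noteq> 0}"
    then have "Max {min (f i) (g (n-i)) | i. i \<le> n} \<noteq> 0" using madd_eq[OF f g] by simp
    moreover have "Max {min (f i) (g (n-i)) | i. i \<le> n} \<in> {min (f i) (g (n-i)) | i. i \<le> n}"
      by (rule Max_in) auto
    ultimately obtain i where i: "i \<le> n" "f i \<noteq> 0" "g (n-i) \<noteq> 0" by auto
    have "i \<le> x" using beta_ge[OF f i(2)] x_def by simp
    moreover have "n - i \<le> y" using beta_ge[OF g i(3)] y_def by simp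
    ultimately show "n \<in> {..<Suc (x+y)}" using i(1) by simp
  qed
  have "beta b (madd b f g) = (\<Sum>n<Suc (x+y). madd b f g n * (b+1)^n)"
    by (rule beta_lessThan[OF finite_subset[OF sub] sub]) simp
  also have "\<dots> = lunar_mult b x y"
    unfolding lunar_mult_def lessThan_Suc_atMost x_def y_def
    using digit_beta[OF f assms] digit_beta[OF g assms] madd_eq[OF f g] by simp
  finally show "beta b (madd b f g) = lunar_mult b (beta b f) (beta b g)"
    using x_def y_def by simp
next
  have "{i. neutral_ms b i \<noteq> 0} = {0}" using assms by (auto simp: neutral_ms_def)
  then show "beta b (neutral_ms b) = b" unfolding beta_def by (simp add: neutral_ms_def)
qed

end
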